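(* Let $G$ be a 2-walk-regular graph that is not bipartite and not complete multipartite. If $G$ is uniquely vector colorable, then $G$ is a core.
   Context: Let $A$ be the adjacency matrix of $G$ and $\circ$ the entrywise (Schur) product. $G$ is 1-walk-regular if for every $\ell\in\mathbb{N}$ there are constants $a_\ell,b_\ell$ with $A^\ell\circ I=a_\ell I$ and $A^\ell\circ A=b_\ell A$. $G$ is 2-walk-regular if it is 1-walk-regular and moreover for every $\ell\in\mathbb{N}$ there is a constant $c_\ell$ with $A^\ell\circ A_2=c_\ell A_2$, where $A_2$ is the adjacency matrix of the distance-2 graph of $G$ (vertices adjacent iff at distance exactly 2 in $G$). A vector $t$-coloring assigns unit vectors $p_i$ to vertices with $\langle p_i,p_j\rangle\le-1/(t-1)$ on edges; $\chi_v(G)$ is the least $t\ge2$ admitting one; $G$ is uniquely vector colorable if any two optimal (i.e. vector $\chi_v(G)$-) colorings have equal Gram matrices. $G$ is a core if every homomorphism $G\to G$ is an automorphism. *)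

theory Defs
  imports Main "HOL-Library.FuncSet" Complex_Main
begin

text \<open>Finite simple graphs: vertex set = UNIV of a finite type, edge relation E
  (assumed symmetric and irreflexive where used).\<close>

definition adj :: "('a \<Rightarrow> 'a \<Rightarrow> bool) \<Rightarrow> 'a \<Rightarrow> 'a \<Rightarrow> real" where
  "adj E i j = (if E i j then 1 else 0)"

definition mmult :: "('a::finite \<Rightarrow> 'a \<Rightarrow> real) \<Rightarrow> ('a \<Rightarrow> 'a \<Rightarrow> real) \<Rightarrow> 'a \<Rightarrow> 'a \<Rightarrow> real" where
  "mmult M N i j = (\<Sum>k\<in>UNIV. M i k * N k j)"

fun mpow :: "('a::finite \<Rightarrow> 'a \<Rightarrow> real) \<Rightarrow> nat \<Rightarrow> 'a \<Rightarrow> 'a \<Rightarrow> real" where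
  "mpow M 0 = (\<lambda>i j. if i = j then 1 else 0)"
| "mpow M (Suc n) = mmult (mpow M n) M"

definition dist2 :: "('a \<Rightarrow> 'a \<Rightarrow> bool) \<Rightarrow> 'a \<Rightarrow> 'a \<Rightarrow> bool" where
  "dist2 E i j \<longleftrightarrow> i \<noteq> j \<and> \<not> E i j \<and> (\<exists>k. E i k \<and> E k j)"

definition one_walk_regular :: "('a::finite \<Rightarrow> 'a \<Rightarrow> bool) \<Rightarrow> bool" where
  "one_walk_regular E \<longleftrightarrow> (\<forall>l::nat.
     (\<exists>a. \<forall>i. mpow (adj E) l i i = a) \<and>
     (\<exists>b. \<forall>i j. E i j \<longrightarrow> mpow (adj E) l i j = b))"

definition two_walk_regular :: "('a::finite \<Rightarrow> 'a \<Rightarrow> bool) \<Rightarrow> bool" where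
  "two_walk_regular E \<longleftrightarrow> one_walk_regular E \<and> (\<forall>l::nat.
     (\<exists>c. \<forall>i j. dist2 E i j \<longrightarrow> mpow (adj E) l i j = c))"

text \<open>Vectors in R^d are represented as functions nat => real, of which only
  the coordinates below d are used.\<close>
definition ip :: "nat \<Rightarrow> (nat \<Rightarrow> real) \<Rightarrow> (nat \<Rightarrow> real) \<Rightarrow> real" where
  "ip d x y = (\<Sum>k<d. x k * y k)"

definition vector_coloring :: "('a \<Rightarrow> 'a \<Rightarrow> bool) \<Rightarrow> real \<Rightarrow> nat \<Rightarrow> ('a \<Rightarrow> nat \<Rightarrow> real) \<Rightarrow> bool" where
  "vector_coloring E t d p \<longleftrightarrow>
     (\<forall>i. ip d (p i) (p i) = 1) \<and> (\<forall>i j. E i j \<longrightarrow> ip d (p i) (p j) \<le> - 1 / (t - 1))"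

definition gram :: "nat \<Rightarrow> ('a \<Rightarrow> nat \<Rightarrow> real) \<Rightarrow> 'a \<Rightarrow> 'a \<Rightarrow> real" where
  "gram d p i j = ip d (p i) (p j)"

definition chi_v :: "('a \<Rightarrow> 'a \<Rightarrow> bool) \<Rightarrow> real" where
  "chi_v E = Inf {t. t \<ge> 2 \<and> (\<exists>d p. vector_coloring E t d p)}"

definition uniquely_vector_colorable :: "('a \<Rightarrow> 'a \<Rightarrow> bool) \<Rightarrow> bool" where
  "uniquely_vector_colorable E \<longleftrightarrow>
     (\<forall>d p d' q. vector_coloring E (chi_v E) d p \<and> vector_coloring E (chi_v E) d' q
        \<longrightarrow> gram d p = gram d' q)"

definition graph_hom :: "('a \<Rightarrow> 'a \<Rightarrow> bool) \<Rightarrow> ('a \<Rightarrow> 'a) \<Rightarrow> bool" where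
  "graph_hom E f \<longleftrightarrow> (\<forall>i j. E i j \<longrightarrow> E (f i) (f j))"

definition graph_aut :: "('a \<Rightarrow> 'a \<Rightarrow> bool) \<Rightarrow> ('a \<Rightarrow> 'a) \<Rightarrow> bool" where
  "graph_aut E f \<longleftrightarrow> bij f \<and> (\<forall>i j. E i j \<longleftrightarrow> E (f i) (f j))"

definition is_core :: "('a \<Rightarrow> 'a \<Rightarrow> bool) \<Rightarrow> bool" where
  "is_core E \<longleftrightarrow> (\<forall>f. graph_hom E f \<longrightarrow> graph_aut E f)"

definition bipartite :: "('a \<Rightarrow> 'a \<Rightarrow> bool) \<Rightarrow> bool" where
  "bipartite E \<longleftrightarrow> (\<exists>S. \<forall>i j. E i j \<longrightarrow> (i \<in> S \<longleftrightarrow> j \<notin> S))"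

definition complete_multipartite :: "('a \<Rightarrow> 'a \<Rightarrow> bool) \<Rightarrow> bool" where
  "complete_multipartite E \<longleftrightarrow> (\<exists>c :: 'a \<Rightarrow> 'a. \<forall>i j. E i j \<longleftrightarrow> c i \<noteq> c j)"

end

theory Submission
  imports Defs "HOL-Analysis.Analysis" "HOL-Computational_Algebra.Polynomial"
begin

fun walk :: "('a \<Rightarrow> 'a \<Rightarrow> bool) \<Rightarrow> nat \<Rightarrow> 'a \<Rightarrow> 'a \<Rightarrow> bool" where
  "walk E 0 x y = (x = y)"
| "walk E (Suc l) x y = (\<exists>k. walk E l x k \<and> E k y)"

lemma walk_closed:
  assumes "\<And>v w. v \<in> M \<Longrightarrow> E v w \<Longrightarrow> w \<in> M" "walk E l x y" "x \<in> M"
  shows "y \<in> M"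
  using assms(2,3) by (induction l arbitrary: y) (auto intro: assms(1))

lemma comb_triangle:
  assumes sym: "\<And>i j. E i j \<Longrightarrow> E j i"
    and irr: "\<And>i. \<not> E i i"
    and eqv: "equivp T"
    and ET: "\<And>i j. E i j \<Longrightarrow> \<not> T i j"
    and D: "\<And>x y. dist2 E x y \<Longrightarrow> T x y"
    and tri: "\<And>u w. E u w \<Longrightarrow> \<exists>c. E u c \<and> E c w"
    and conn: "\<And>x y. \<exists>l. walk E l x y"
  shows "complete_multipartite E"
proof -
  have Tsym: "T x y \<Longrightarrow> T y x" for x y using eqv by (meson equivp_symp)
  have Ttr: "T x y \<Longrightarrow> T y z \<Longrightarrow> T x z" for x y z using eqv by (meson equivp_transp)
  have Tref: "T x x" for x using eqv by (meson equivp_reflp)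
  have W: "walk E l x y \<Longrightarrow> x = y \<or> E x y \<or> dist2 E x y" for l x y
  proof (induction l arbitrary: y)
    case 0 then show ?case by simp
  next
    case (Suc l)
    then obtain u where u: "walk E l x u" "E u y" by auto
    from Suc.IH[OF u(1)] consider "x = u" | "E x u" | "dist2 E x u" by blast
    then show ?case
    proof cases
      case 1 then show ?thesis using u by simp
    next
      case 2 then show ?thesis using u unfolding dist2_def by blast
    next
      case 3
      show ?thesis
      proof (rule ccontr)
        assume nc: "\<not> (x = y \<or> E x y \<or> dist2 E x y)"
        from 3 obtain a where a: "E x a" "E a u" "\<not> E x u" "x \<noteq> u" unfolding dist2_def by blast
        have Txu: "T x u" using D[OF 3] .
        have ay: "a \<noteq> y" using nc a by blast
        have nay: "\<not> E a y" using nc a ay unfolding dist2_def by blast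
        have "dist2 E a y" unfolding dist2_def using ay nay a u by blast
        hence Tay: "T a y" using D by blast
        obtain c where c: "E a c" "E c u" using tri[OF a(2)] by blast
        have cx: "E c x"
        proof (rule ccontr)
          assume "\<not> E c x"
          moreover have "c \<noteq> x" using c a by blast
          ultimately have "dist2 E c x" unfolding dist2_def using a c sym by blast
          hence "T c x" using D by blast
          hence "T c u" using Ttr Txu by blast
          thus False using ET c by blast
        qed
        have cy: "E c y"
        proof (rule ccontr)
          assume "\<not> E c y"
          moreover have "c \<noteq> y" using c nay by blast
          ultimately have "dist2 E c y" unfolding dist2_def using u c by blast
          hence "T c y" using D by blast
          hence "T c a" using Ttr Tsym Tay by blast
          thus False using ET c sym by blast
        qed
        have "dist2 E x y" unfolding dist2_def using nc cx cy sym by blast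
        thus False using nc by blast
      qed
    qed
  qed
  define c where "c i = (SOME j. T i j)" for i
  have ci: "T i (c i)" for i unfolding c_def by (rule someI[of "T i" i]) (rule Tref)
  have ceq: "c i = c j \<longleftrightarrow> T i j" for i j
  proof
    assume "c i = c j"
    hence "T j (c i)" using ci[of j] by simp
    thus "T i j" using ci[of i] Tsym Ttr by blast
  next
    assume "T i j"
    hence "T i = T j"
    proof (intro ext iffI)
      fix x assume "T i x" thus "T j x" using \<open>T i j\<close> Tsym Ttr by blast
    next
      fix x assume "T j x" thus "T i x" using \<open>T i j\<close> Ttr by blast
    qed
    thus "c i = c j" unfolding c_def by simp
  qed
  have "E i j \<longleftrightarrow> c i \<noteq> c j" for i j
  proof
    assume "E i j" thus "c i \<noteq> c j" using ceq ET by blast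
  next
    assume "c i \<noteq> c j"
    hence nT: "\<not> T i j" using ceq by blast
    obtain l where "walk E l i j" using conn by blast
    from W[OF this] show "E i j" using nT Tref D by blast
  qed
  thus ?thesis unfolding complete_multipartite_def by blast
qed

lemma comb_trifree:
  assumes sym: "\<And>i j. E i j \<Longrightarrow> E j i"
    and eqv: "equivp T"
    and ET: "\<And>i j. E i j \<Longrightarrow> \<not> T i j"
    and D: "\<And>x y. dist2 E x y \<Longrightarrow> T x y"
    and tf: "\<And>u w c. E u w \<Longrightarrow> E u c \<Longrightarrow> E c w \<Longrightarrow> False"
    and conn: "\<And>x y. \<exists>l. walk E l x y"
    and nb: "\<not> bipartite E"
  shows False
proof -
  have Tsym: "T x y \<Longrightarrow> T y x" for x y using eqv by (meson equivp_symp)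
  have Ttr: "T x y \<Longrightarrow> T y z \<Longrightarrow> T x z" for x y z using eqv by (meson equivp_transp)
  have Tref: "T x x" for x using eqv by (meson equivp_reflp)
  have EV: "walk E (2*m) x y \<Longrightarrow> T x y" for m x y
  proof (induction m arbitrary: y)
    case 0 then show ?case using Tref by simp
  next
    case (Suc m)
    have "walk E (Suc (Suc (2*m))) x y" using Suc.prems by simp
    then obtain u z where uz: "walk E (2*m) x u" "E u z" "E z y" by auto
    have Txu: "T x u" using Suc.IH[OF uz(1)] .
    have "T u y"
    proof (cases "u = y")
      case True then show ?thesis using Tref by simp
    next
      case False
      have "\<not> E u y" using tf uz by blast
      hence "dist2 E u y" unfolding dist2_def using False uz by blast
      thus ?thesis using D by blast
    qed
    thus ?case using Ttr Txu by blast
  qed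
  obtain r :: 'a where True by blast
  define S where "S = {v. \<exists>m. walk E (2*m) r v}"
  have odd_ex: "\<exists>m. walk E (Suc (2*m)) r v" if "v \<notin> S" for v
  proof -
    obtain l where l: "walk E l r v" using conn by blast
    show ?thesis
    proof (cases "even l")
      case True then have "l = 2*(l div 2)" by presburger
      thus ?thesis using l that unfolding S_def by (metis (mono_tags, lifting) mem_Collect_eq)
    next
      case False then have "l = Suc (2*(l div 2))" by presburger
      thus ?thesis using l by metis
    qed
  qed
  have "\<not> (\<forall>i j. E i j \<longrightarrow> (i \<in> S \<longleftrightarrow> j \<notin> S))"
    using nb unfolding bipartite_def by blast
  then obtain i j where ij: "E i j" "\<not> (i \<in> S \<longleftrightarrow> j \<notin> S)" by blast
  have "\<exists>v. (\<exists>m. walk E (2*m) r v) \<and> (\<exists>m. walk E (Suc (2*m)) r v)"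
  proof (cases "i \<in> S")
    case True
    hence jS: "j \<in> S" using ij by blast
    from True obtain m where "walk E (2*m) r i" unfolding S_def by blast
    hence "walk E (Suc (2*m)) r j" using ij by auto
    thus ?thesis using jS unfolding S_def by blast
  next
    case False
    hence jS: "j \<notin> S" using ij by blast
    from odd_ex[OF False] obtain m where "walk E (Suc (2*m)) r i" by blast
    hence "walk E (2*(Suc m)) r j" using ij by auto
    thus ?thesis using jS unfolding S_def by blast
  qed
  then obtain v m1 m2 where v: "walk E (2*m1) r v" "walk E (Suc (2*m2)) r v" by blast
  from v(2) obtain w where w: "walk E (2*m2) r w" "E w v" by auto
  have "T r v" using EV[OF v(1)] .
  moreover have "T r w" using EV[OF w(1)] .
  ultimately have "T w v" using Tsym Ttr by blast
  thus False using ET w by blast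
qed

lemma retraction_id:
  assumes sym: "\<And>i j. E i j \<Longrightarrow> E j i"
    and eqv: "equivp T"
    and ET: "\<And>i j. E i j \<Longrightarrow> \<not> T i j"
    and hom: "graph_hom E g"
    and idem: "\<And>v. g (g v) = g v"
    and Tg: "\<And>v. T v (g v)"
    and nD: "\<And>x y. dist2 E x y \<Longrightarrow> \<not> T x y"
    and conn: "\<And>x y. \<exists>l. walk E l x y"
  shows "g v = v"
proof (rule ccontr)
  assume nv: "g v \<noteq> v"
  define M where "M = {u. g u \<noteq> u}"
  have cl: "w \<in> M" if "u \<in> M" "E u w" for u w
  proof (rule ccontr)
    assume "w \<notin> M"
    hence gw: "g w = w" unfolding M_def by simp
    have "E (g u) (g w)" using hom that(2) unfolding graph_hom_def by blast
    hence "E w (g u)" using gw sym by simp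
    moreover have "\<not> E u (g u)" using ET Tg by blast
    moreover have "u \<noteq> g u" using that(1) unfolding M_def by simp
    ultimately have "dist2 E u (g u)" unfolding dist2_def using that(2) by blast
    thus False using nD Tg by blast
  qed
  obtain l where "walk E l v (g v)" using conn by blast
  moreover have "v \<in> M" using nv unfolding M_def by simp
  ultimately have "g v \<in> M" using walk_closed[of M E l v "g v"] cl by blast
  thus False using idem unfolding M_def by simp
qed

definition idm :: "'a \<Rightarrow> 'a \<Rightarrow> real" where
  "idm = (\<lambda>i j. if i = j then 1 else 0)"

lemma mpow_0'[simp]: "mpow M 0 = idm" by (simp add: idm_def)
declare mpow.simps(1)[simp del]

lemma mmult_assoc: "mmult (mmult M N) P = mmult M (mmult N P)"
  unfolding mmult_def
  by (auto intro!: ext simp: sum_distrib_left sum_distrib_right mult.assoc intro: sum.swap)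

lemma mmult_idm_left[simp]: "mmult idm M = M"
proof (intro ext)
  fix i j
  have "mmult idm M i j = (\<Sum>k\<in>UNIV. if i = k then M k j else 0)"
    unfolding mmult_def idm_def by (rule sum.cong) auto
  thus "mmult idm M i j = M i j" by simp
qed

lemma mmult_idm_right[simp]: "mmult M idm = M"
proof (intro ext)
  fix i j
  have "mmult M idm i j = (\<Sum>k\<in>UNIV. if k = j then M i k else 0)"
    unfolding mmult_def idm_def by (rule sum.cong) auto
  thus "mmult M idm i j = M i j" by simp
qed

lemma mpow_Suc_left: "mpow M (Suc n) = mmult M (mpow M n)"
proof (induction n)
  case 0 then show ?case by (simp add: mpow_0')
next
  case (Suc n)
  have "mpow M (Suc (Suc n)) = mmult (mmult M (mpow M n)) M" using Suc by simp
  also have "\<dots> = mmult M (mpow M (Suc n))" by (simp add: mmult_assoc)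
  finally show ?case .
qed

lemma mpow_add: "mpow M (a + b) = mmult (mpow M a) (mpow M b)"
proof (induction b)
  case 0 then show ?case by (simp add: mpow_0')
next
  case (Suc b) then show ?case by (simp add: mmult_assoc)
qed

lemma mmult_zero_left[simp]: "mmult (\<lambda>i j. 0) M = (\<lambda>i j. 0)"
  unfolding mmult_def by simp
lemma mmult_zero_right[simp]: "mmult M (\<lambda>i j. 0) = (\<lambda>i j. 0)"
  unfolding mmult_def by simp

lemma mmult_add_left: "mmult (\<lambda>i j. X i j + Y i j) M = (\<lambda>i j. mmult X M i j + mmult Y M i j)"
  unfolding mmult_def by (auto intro!: ext simp: distrib_right sum.distrib)
lemma mmult_add_right: "mmult M (\<lambda>i j. X i j + Y i j) = (\<lambda>i j. mmult M X i j + mmult M Y i j)"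
  unfolding mmult_def by (auto intro!: ext simp: distrib_left sum.distrib)
lemma mmult_scale_left: "mmult (\<lambda>i j. c * X i j) M = (\<lambda>i j. c * mmult X M i j)"
  unfolding mmult_def by (auto intro!: ext simp: sum_distrib_left mult.assoc)
lemma mmult_scale_right: "mmult M (\<lambda>i j. c * X i j) = (\<lambda>i j. c * mmult M X i j)"
  unfolding mmult_def by (auto intro!: ext simp: sum_distrib_left algebra_simps)
lemma mmult_sum_right: "mmult M (\<lambda>i j. \<Sum>l\<in>L. X l i j) = (\<lambda>i j. \<Sum>l\<in>L. mmult M (X l) i j)"
  unfolding mmult_def by (auto intro!: ext simp: sum_distrib_left intro: sum.swap)
lemma mmult_sum_left: "mmult (\<lambda>i j. \<Sum>l\<in>L. X l i j) M = (\<lambda>i j. \<Sum>l\<in>L. mmult (X l) M i j)"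
  unfolding mmult_def by (auto intro!: ext simp: sum_distrib_right intro: sum.swap)

lemma mpow_sym:
  assumes "\<And>i j. M i j = M j i"
  shows "mpow M n i j = mpow M n j i"
proof (induction n arbitrary: i j)
  case 0 then show ?case by (simp add: idm_def)
next
  case (Suc n)
  have "mpow M (Suc n) j i = (\<Sum>k\<in>UNIV. mpow M n j k * M k i)" by (simp add: mmult_def)
  also have "\<dots> = (\<Sum>k\<in>UNIV. M i k * mpow M n k j)" using Suc assms by (simp add: mult.commute)
  also have "\<dots> = mmult M (mpow M n) i j" by (simp add: mmult_def)
  also have "\<dots> = mpow M (Suc n) i j" using mpow_Suc_left by metis
  finally show ?case by simp
qed

definition meval :: "('a::finite \<Rightarrow> 'a \<Rightarrow> real) \<Rightarrow> real poly \<Rightarrow> 'a \<Rightarrow> 'a \<Rightarrow> real" where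
  "meval M p = (\<lambda>i j. \<Sum>l\<le>degree p. coeff p l * mpow M l i j)"

lemma meval_bound:
  assumes "degree p < N"
  shows "meval M p i j = (\<Sum>l<N. coeff p l * mpow M l i j)"
proof -
  have "(\<Sum>l<N. coeff p l * mpow M l i j) = (\<Sum>l\<le>degree p. coeff p l * mpow M l i j)"
    by (rule sum.mono_neutral_right) (use assms in \<open>auto simp: coeff_eq_0 not_le\<close>)
  thus ?thesis unfolding meval_def by simp
qed

lemma meval_0[simp]: "meval M 0 = (\<lambda>i j. 0)"
  unfolding meval_def by simp

lemma meval_add: "meval M (p + q) = (\<lambda>i j. meval M p i j + meval M q i j)"
proof (intro ext)
  fix i j
  define N where "N = Suc (degree p + degree q)"
  have "degree (p + q) < N" unfolding N_def using degree_add_le_max[of p q] by linarith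
  moreover have "degree p < N" "degree q < N" unfolding N_def by auto
  ultimately show "meval M (p + q) i j = meval M p i j + meval M q i j"
    by (simp add: meval_bound[of _ N] distrib_right sum.distrib)
qed

lemma meval_smult: "meval M (smult c p) = (\<lambda>i j. c * meval M p i j)"
proof (intro ext)
  fix i j
  define N where "N = Suc (degree p)"
  have "degree (smult c p) < N" "degree p < N" unfolding N_def by auto
  thus "meval M (smult c p) i j = c * meval M p i j"
    by (simp add: meval_bound[of _ N] sum_distrib_left mult.assoc)
qed

lemma meval_pCons: "meval M (pCons a p) = (\<lambda>i j. a * idm i j + mmult M (meval M p) i j)"
proof (intro ext)
  fix i j
  define N where "N = Suc (degree p)"
  have d1: "degree (pCons a p) < Suc N" unfolding N_def by (simp add: degree_pCons_le le_imp_less_Suc)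
  have d2: "degree p < N" unfolding N_def by auto
  have "meval M (pCons a p) i j = (\<Sum>l<Suc N. coeff (pCons a p) l * mpow M l i j)"
    by (rule meval_bound[OF d1])
  also have "\<dots> = a * idm i j + (\<Sum>l<N. coeff p l * mpow M (Suc l) i j)"
    by (subst sum.lessThan_Suc_shift) (simp del: mpow.simps sum.lessThan_Suc)
  also have "(\<Sum>l<N. coeff p l * mpow M (Suc l) i j) = mmult M (meval M p) i j"
  proof -
    have "mmult M (meval M p) = mmult M (\<lambda>i j. \<Sum>l<N. coeff p l * mpow M l i j)"
    proof -
      have "meval M p = (\<lambda>i j. \<Sum>l<N. coeff p l * mpow M l i j)"
        by (intro ext) (rule meval_bound[OF d2])
      thus ?thesis by simp
    qed
    also have "\<dots> = (\<lambda>i j. \<Sum>l<N. mmult M (\<lambda>i j. coeff p l * mpow M l i j) i j)"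
      by (rule mmult_sum_right)
    also have "\<dots> = (\<lambda>i j. \<Sum>l<N. coeff p l * mpow M (Suc l) i j)"
      by (simp del: mpow.simps add: mmult_scale_right mpow_Suc_left)
    finally show ?thesis by simp
  qed
  finally show "meval M (pCons a p) i j = a * idm i j + mmult M (meval M p) i j" .
qed

lemma meval_mult: "meval M (p * q) = mmult (meval M p) (meval M q)"
proof (induction p)
  case 0 then show ?case by simp
next
  case (pCons a p)
  have "meval M (pCons a p * q) = meval M (smult a q + pCons 0 (p * q))" by simp
  also have "\<dots> = (\<lambda>i j. a * meval M q i j + mmult M (mmult (meval M p) (meval M q)) i j)"
    by (simp add: meval_add meval_smult meval_pCons pCons.IH idm_def)
  also have "\<dots> = mmult (meval M (pCons a p)) (meval M q)"
    by (simp add: meval_pCons mmult_add_left mmult_scale_left mmult_assoc)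
  finally show ?case .
qed

lemma meval_one[simp]: "meval M 1 = idm"
  unfolding meval_def by (simp add: mpow_0')

lemma meval_power: "meval M (p ^ r) = mpow (meval M p) r"
proof (induction r)
  case 0 then show ?case by (simp add: mpow_0')
next
  case (Suc r) then show ?case by (simp del: mpow.simps add: meval_mult mpow_Suc_left)
qed

lemma meval_lin: "meval M [:-c, 1:] = (\<lambda>i j. M i j - c * idm i j)"
  by (rule ext)+ (simp add: meval_pCons)

definition qf :: "('a::finite \<Rightarrow> 'a \<Rightarrow> real) \<Rightarrow> ('a \<Rightarrow> real) \<Rightarrow> real" where
  "qf M x = (\<Sum>i\<in>UNIV. \<Sum>j\<in>UNIV. M i j * x i * x j)"

definition nrm :: "('a::finite \<Rightarrow> real) \<Rightarrow> real" where
  "nrm x = (\<Sum>i\<in>UNIV. (x i)\<^sup>2)"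

lemma meval_monom: "meval M (monom c l) = (\<lambda>i j. c * mpow M l i j)"
proof (intro ext)
  fix i j
  have "degree (monom c l) < Suc l" by (simp add: degree_monom_le le_imp_less_Suc)
  hence "meval M (monom c l) i j = (\<Sum>k<Suc l. coeff (monom c l) k * mpow M k i j)"
    by (rule meval_bound)
  also have "\<dots> = (\<Sum>k<Suc l. if k = l then c * mpow M l i j else 0)"
    by (rule sum.cong) (auto simp: coeff_monom)
  finally show "meval M (monom c l) i j = c * mpow M l i j" by simp
qed

lemma meval_diff: "meval M (p - q) = (\<lambda>i j. meval M p i j - meval M q i j)"
proof -
  have e: "p - q = p + smult (-1) q" by (rule poly_eqI) simp
  show ?thesis unfolding e meval_add meval_smult by simp
qed

lemma meval_sum: "meval M (\<Sum>l\<in>L. f l) = (\<lambda>i j. \<Sum>l\<in>L. meval M (f l) i j)"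
proof (induction L rule: infinite_finite_induct)
  case (infinite A) then show ?case by simp
next
  case empty then show ?case by simp
next
  case (insert x F) then show ?case by (simp add: meval_add)
qed

lemma annihilator:
  fixes M :: "'a::finite \<Rightarrow> 'a \<Rightarrow> real"
  shows "\<exists>m. m \<noteq> 0 \<and> meval M m = (\<lambda>i j. 0)"
proof -
  define V :: "nat \<Rightarrow> real^('a \<times> 'a)" where "V l = (\<chi> ij. mpow M l (fst ij) (snd ij))" for l
  define N where "N = CARD('a \<times> 'a)"
  have Veq: "mpow M a = mpow M b" if "V a = V b" for a b
  proof (intro ext)
    fix i j
    have "V a $ (i, j) = V b $ (i, j)" using that by simp
    thus "mpow M a i j = mpow M b i j" unfolding V_def by simp
  qed
  show ?thesis
  proof (cases "inj_on V {..N}")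
    case False
    then obtain a b where ab: "a \<noteq> b" "V a = V b" unfolding inj_on_def by blast
    define m where "m = monom (1::real) a - monom 1 b"
    have "coeff m a = 1" using ab unfolding m_def by (simp add: coeff_monom)
    hence "m \<noteq> 0" by auto
    moreover have "meval M m = (\<lambda>i j. 0)"
      unfolding m_def by (simp add: meval_diff meval_monom Veq[OF ab(2)])
    ultimately show ?thesis by blast
  next
    case True
    define S where "S = V ` {..N}"
    have "card S = Suc N" unfolding S_def using card_image[OF True] by simp
    hence "dependent S" by (intro dependent_biggerset) (simp add: N_def)
    then obtain T u where T: "finite T" "T \<subseteq> S" "(\<Sum>v\<in>T. u v *\<^sub>R v) = 0" "\<exists>v\<in>T. u v \<noteq> 0"
      unfolding real_vector.dependent_explicit by blast
    define c where "c l = (if V l \<in> T then u (V l) else 0)" for l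
    define m where "m = (\<Sum>l\<le>N. monom (c l) l)"
    have cm: "coeff m l = (if l \<le> N then c l else 0)" for l
      unfolding m_def by (simp add: coeff_sum coeff_monom)
    obtain v where v: "v \<in> T" "u v \<noteq> 0" using T by blast
    then obtain l0 where l0: "l0 \<le> N" "v = V l0" using T(2) unfolding S_def by blast
    have "coeff m l0 \<noteq> 0" using cm l0 v unfolding c_def by simp
    hence "m \<noteq> 0" by auto
    moreover have "meval M m = (\<lambda>i j. 0)"
    proof (intro ext)
      fix i j
      have "meval M m i j = (\<Sum>l\<le>N. c l * mpow M l i j)"
        unfolding m_def meval_sum by (simp add: meval_monom)
      also have "\<dots> = (\<Sum>l\<in>{l\<in>{..N}. V l \<in> T}. u (V l) * (V l $ (i,j)))"
        by (rule sum.mono_neutral_cong_right) (auto simp: c_def V_def)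
      also have "\<dots> = (\<Sum>w\<in>V ` {l\<in>{..N}. V l \<in> T}. u w * (w $ (i,j)))"
        by (rule sum.reindex[symmetric, unfolded comp_def]) (use True in \<open>auto intro: inj_on_subset\<close>)
      also have "V ` {l\<in>{..N}. V l \<in> T} = T" using T(2) unfolding S_def by blast
      also have "(\<Sum>w\<in>T. u w * (w $ (i,j))) = (\<Sum>w\<in>T. u w *\<^sub>R w) $ (i,j)" by simp
      also have "\<dots> = 0" using T(3) by simp
      finally show "meval M m i j = 0" .
    qed
    ultimately show ?thesis by blast
  qed
qed

lemma rayleigh:
  fixes M :: "'a::finite \<Rightarrow> 'a \<Rightarrow> real"
  shows "\<exists>lam x. nrm x = 1 \<and> qf M x = lam \<and> (\<forall>y. qf M y \<ge> lam * nrm y)"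
proof -
  define g :: "real^'a \<Rightarrow> real" where "g v = (\<Sum>i\<in>UNIV. \<Sum>j\<in>UNIV. M i j * v$i * v$j)" for v
  have cont: "continuous_on (sphere 0 1) g" unfolding g_def by (intro continuous_intros)
  have nv: "norm v = sqrt (\<Sum>i\<in>UNIV. (v$i)\<^sup>2)" for v :: "real^'a"
    by (simp add: norm_eq_sqrt_inner inner_vec_def power2_eq_square)
  obtain v0 where v0: "v0 \<in> sphere 0 1" "\<And>w. w \<in> sphere 0 1 \<Longrightarrow> g v0 \<le> g w"
    using continuous_attains_inf[OF compact_sphere _ cont] by auto
  define x where "x i = v0 $ i" for i
  have "norm v0 = 1" using v0(1) by simp
  hence nx: "nrm x = 1" unfolding nrm_def x_def using nv[of v0] by simp
  have gx: "qf M x = g v0" unfolding qf_def g_def x_def by simp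
  have "qf M y \<ge> g v0 * nrm y" for y
  proof (cases "nrm y = 0")
    case True
    have "\<forall>i\<in>UNIV. (y i)\<^sup>2 = 0"
      using True unfolding nrm_def by (subst sum_nonneg_eq_0_iff[symmetric]) auto
    hence "y = (\<lambda>i. 0)" by auto
    thus ?thesis by (simp add: qf_def nrm_def)
  next
    case False
    have s0: "nrm y > 0" using False unfolding nrm_def by (metis sum_nonneg zero_le_power2 order_le_less)
    define s where "s = sqrt (nrm y)"
    have s: "s > 0" "s * s = nrm y" using s0 unfolding s_def by auto
    define w :: "real^'a" where "w = (\<chi> i. y i / s)"
    have "(\<Sum>i\<in>UNIV. (w$i)\<^sup>2) = (\<Sum>i\<in>UNIV. (y i)\<^sup>2) / (s * s)"
      unfolding w_def by (simp add: power_divide sum_divide_distrib power2_eq_square)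
    also have "\<dots> = 1" using s(2) False unfolding nrm_def by simp
    finally have "norm w = 1" using nv[of w] by simp
    hence "g v0 \<le> g w" using v0(2) by simp
    also have "g w = qf M y / (s * s)"
      unfolding g_def qf_def w_def by (simp add: sum_divide_distrib)
    finally have "g v0 \<le> qf M y / nrm y" using s by simp
    thus ?thesis using s0 by (simp add: pos_le_divide_eq)
  qed
  thus ?thesis using nx gx by blast
qed

lemma qf_expand:
  "qf B (\<lambda>i. x i + t * z i) = qf B x + t * (\<Sum>i\<in>UNIV. \<Sum>j\<in>UNIV. B i j * (x i * z j + z i * x j)) + t\<^sup>2 * qf B z"
proof -
  have e: "B i j * (x i + t * z i) * (x j + t * z j) = B i j * x i * x j + t * (B i j * (x i * z j + z i * x j)) + t\<^sup>2 * (B i j * z i * z j)" for i j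
    by (simp add: algebra_simps power2_eq_square)
  show ?thesis unfolding qf_def e sum.distrib
    by (simp only: sum_distrib_left[symmetric])
qed

lemma psd_kernel:
  fixes B :: "'a::finite \<Rightarrow> 'a \<Rightarrow> real"
  assumes sym: "\<And>i j. B i j = B j i"
    and psd: "\<And>y. qf B y \<ge> 0"
    and x0: "qf B x = 0"
  shows "(\<Sum>j\<in>UNIV. B i j * x j) = 0"
proof -
  define z where "z i = (\<Sum>j\<in>UNIV. B i j * x j)" for i
  define s where "s = (\<Sum>i\<in>UNIV. (z i)\<^sup>2)"
  define c where "c = qf B z"
  have c0: "c \<ge> 0" unfolding c_def using psd by simp
  have cross: "(\<Sum>i\<in>UNIV. \<Sum>j\<in>UNIV. B i j * (x i * z j + z i * x j)) = 2 * s"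
  proof -
    have 1: "(\<Sum>i\<in>UNIV. \<Sum>j\<in>UNIV. B i j * (z i * x j)) = s"
      unfolding s_def z_def by (simp add: sum_distrib_left power2_eq_square algebra_simps)
    have "(\<Sum>i\<in>UNIV. \<Sum>j\<in>UNIV. B i j * (x i * z j)) = (\<Sum>j\<in>UNIV. \<Sum>i\<in>UNIV. B i j * (x i * z j))"
      by (rule sum.swap)
    also have "\<dots> = (\<Sum>j\<in>UNIV. \<Sum>i\<in>UNIV. B j i * (z j * x i))"
      using sym by (simp add: algebra_simps)
    also have "\<dots> = s" using 1 by simp
    finally have 2: "(\<Sum>i\<in>UNIV. \<Sum>j\<in>UNIV. B i j * (x i * z j)) = s" .
    show ?thesis using 1 2 by (simp add: distrib_left sum.distrib)
  qed
  have ineq: "0 \<le> t * (2 * s) + t\<^sup>2 * c" for t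
    using psd[of "\<lambda>i. x i + t * z i"] unfolding qf_expand cross c_def x0 by simp
  have s0: "s \<ge> 0" unfolding s_def by (simp add: sum_nonneg)
  have "s = 0"
  proof (rule ccontr)
    assume "s \<noteq> 0" hence sp: "s > 0" using s0 by simp
    define t where "t = - s / (c + 1)"
    have tn: "t < 0" unfolding t_def using sp c0 by simp
    have "s * c / (c + 1) \<le> s" using sp c0 by (simp add: divide_le_eq algebra_simps)
    hence "t * c \<ge> - s" unfolding t_def by simp
    hence pos: "2 * s + t * c > 0" using sp by simp
    have "t * (2 * s) + t\<^sup>2 * c = t * (2 * s + t * c)" by (simp add: algebra_simps power2_eq_square)
    also have "\<dots> < 0" using tn pos by (rule mult_neg_pos)
    finally show False using ineq[of t] by simp
  qed
  hence "\<forall>i\<in>UNIV. (z i)\<^sup>2 = 0" unfolding s_def by (subst sum_nonneg_eq_0_iff[symmetric]) auto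
  thus ?thesis unfolding z_def by simp
qed

lemma semisimple:
  fixes B :: "'a::finite \<Rightarrow> 'a \<Rightarrow> real"
  assumes sym: "\<And>i j. B i j = B j i"
    and z: "mmult B (mmult B Z) = (\<lambda>i j. 0)"
  shows "mmult B Z = (\<lambda>i j. 0)"
proof (intro ext)
  fix i j
  define Y where "Y = mmult B Z"
  have "(\<Sum>a\<in>UNIV. (Y a j)\<^sup>2) = (\<Sum>a\<in>UNIV. Y a j * (\<Sum>k\<in>UNIV. B a k * Z k j))"
    unfolding Y_def mmult_def by (simp add: power2_eq_square)
  also have "\<dots> = (\<Sum>a\<in>UNIV. \<Sum>k\<in>UNIV. Y a j * B a k * Z k j)"
    by (simp add: sum_distrib_left mult.assoc)
  also have "\<dots> = (\<Sum>k\<in>UNIV. \<Sum>a\<in>UNIV. Y a j * B a k * Z k j)"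
    by (rule sum.swap)
  also have "\<dots> = (\<Sum>k\<in>UNIV. \<Sum>a\<in>UNIV. Z k j * (B k a * Y a j))"
    by (intro sum.cong refl) (metis sym mult.commute mult.assoc)
  also have "\<dots> = (\<Sum>k\<in>UNIV. Z k j * (\<Sum>a\<in>UNIV. B k a * Y a j))"
    by (simp add: sum_distrib_left)
  also have "\<dots> = 0" using z unfolding Y_def by (simp add: mmult_def[of B "mmult B Z"] fun_eq_iff)
  finally have "\<forall>a\<in>UNIV. (Y a j)\<^sup>2 = 0" by (subst sum_nonneg_eq_0_iff[symmetric]) auto
  thus "mmult B Z i j = 0" unfolding Y_def by simp
qed

lemma meval_eig:
  assumes "mmult A X = (\<lambda>i j. lam * X i j)"
  shows "mmult (meval A p) X = (\<lambda>i j. poly p lam * X i j)"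
proof (induction p)
  case 0 then show ?case by simp
next
  case (pCons a p)
  have "mmult (meval A (pCons a p)) X = (\<lambda>i j. a * X i j + mmult A (mmult (meval A p) X) i j)"
    by (simp add: meval_pCons mmult_add_left mmult_scale_left mmult_assoc)
  also have "\<dots> = (\<lambda>i j. a * X i j + poly p lam * (lam * X i j))"
    by (simp add: pCons.IH mmult_scale_right assms)
  also have "\<dots> = (\<lambda>i j. poly (pCons a p) lam * X i j)"
    by (simp add: algebra_simps)
  finally show ?case .
qed

lemma qf_shift: "qf (\<lambda>i j. A i j - lam * idm i j) y = qf A y - lam * nrm y"
proof -
  have "qf (\<lambda>i j. A i j - lam * idm i j) y = qf A y - (\<Sum>i\<in>UNIV. \<Sum>j\<in>UNIV. lam * idm i j * y i * y j)"
    unfolding qf_def by (simp add: algebra_simps sum_subtractf)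
  also have "(\<Sum>i\<in>UNIV. \<Sum>j\<in>UNIV. lam * idm i j * y i * y j) = (\<Sum>i\<in>UNIV. lam * (y i)\<^sup>2)"
  proof (rule sum.cong[OF refl])
    fix i
    have "(\<Sum>j\<in>UNIV. lam * idm i j * y i * y j) = (\<Sum>j\<in>UNIV. if i = j then lam * (y i)\<^sup>2 else 0)"
      by (rule sum.cong) (auto simp: idm_def power2_eq_square)
    thus "(\<Sum>j\<in>UNIV. lam * idm i j * y i * y j) = lam * (y i)\<^sup>2" by simp
  qed
  finally show ?thesis by (simp add: nrm_def sum_distrib_left)
qed

lemma mmult_shift: "mmult (\<lambda>i j. A i j - lam * idm i j) Z = (\<lambda>i j. mmult A Z i j - lam * Z i j)"
proof (intro ext)
  fix i j
  have "mmult (\<lambda>i j. A i j - lam * idm i j) Z i j = mmult A Z i j - (\<Sum>k\<in>UNIV. lam * idm i k * Z k j)"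
    unfolding mmult_def by (simp add: algebra_simps sum_subtractf)
  also have "(\<Sum>k\<in>UNIV. lam * idm i k * Z k j) = (\<Sum>k\<in>UNIV. if i = k then lam * Z i j else 0)"
    by (rule sum.cong) (auto simp: idm_def)
  finally show "mmult (\<lambda>i j. A i j - lam * idm i j) Z i j = mmult A Z i j - lam * Z i j" by simp
qed

lemma pow_kill:
  assumes sym: "\<And>i j. B i j = B j i"
  shows "mmult (mpow B (Suc r)) Z = (\<lambda>i j. 0) \<Longrightarrow> mmult B Z = (\<lambda>i j. 0)"
proof (induction r arbitrary: Z)
  case 0 then show ?case by simp
next
  case (Suc r)
  have "mmult (mpow B (Suc r)) (mmult B Z) = mmult (mpow B (Suc (Suc r))) Z"
    by (simp only: mpow.simps(2) mmult_assoc)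
  hence "mmult B (mmult B Z) = (\<lambda>i j. 0)" using Suc by simp
  thus ?case using semisimple[of B, OF sym] by blast
qed

lemma projector_exists:
  fixes A :: "'a::finite \<Rightarrow> 'a \<Rightarrow> real"
  assumes sym: "\<And>i j. A i j = A j i"
  shows "\<exists>lam F c D. (\<forall>y. qf A y \<ge> lam * nrm y) \<and> (\<exists>x. nrm x = 1 \<and> qf A x = lam)
    \<and> F \<noteq> (\<lambda>i j. 0) \<and> mmult A F = (\<lambda>i j. lam * F i j) \<and> (\<forall>i j. F i j = F j i)
    \<and> mmult F F = F \<and> F = (\<lambda>i j. \<Sum>l\<le>D. c l * mpow A l i j)"
proof -
  obtain lam x where x: "nrm x = 1" "qf A x = lam" and lmin: "\<forall>y. qf A y \<ge> lam * nrm y"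
    using rayleigh[of A] by blast
  define B where "B = (\<lambda>i j. A i j - lam * idm i j)"
  have symB: "B i j = B j i" for i j unfolding B_def idm_def using sym by auto
  have psdB: "qf B y \<ge> 0" for y unfolding B_def qf_shift using lmin by simp
  have xB: "qf B x = 0" unfolding B_def qf_shift using x by simp
  define X where "X = (\<lambda>i (j::'a). x i)"
  have BX: "mmult B X = (\<lambda>i j. 0)"
    using psd_kernel[of B, OF symB psdB xB] unfolding mmult_def X_def by (auto intro!: ext)
  have AX: "mmult A X = (\<lambda>i j. lam * X i j)"
    using BX unfolding B_def mmult_shift by (auto simp: fun_eq_iff)
  obtain m where m: "m \<noteq> 0" "meval A m = (\<lambda>i j. 0)" using annihilator by blast
  obtain q where q: "m = [:- lam, 1:] ^ order lam m * q" "\<not> [:- lam, 1:] dvd q"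
    using order_decomp[OF m(1)] by blast
  have pq: "poly q lam \<noteq> 0" using q(2) poly_eq_0_iff_dvd by blast
  define Q where "Q = meval A q"
  have BQ0: "mmult (mpow B (order lam m)) Q = (\<lambda>i j. 0)"
    using m(2) unfolding Q_def B_def by (subst (asm) q(1)) (simp only: meval_mult meval_power meval_lin)
  have QX: "mmult Q X = (\<lambda>i j. poly q lam * X i j)" unfolding Q_def by (rule meval_eig[OF AX])
  have xnz: "\<exists>i. x i \<noteq> 0"
  proof (rule ccontr)
    assume "\<not> ?thesis" hence "nrm x = 0" unfolding nrm_def by simp
    thus False using x by simp
  qed
  then obtain i0 where i0: "x i0 \<noteq> 0" by blast
  have ord: "order lam m \<noteq> 0"
  proof
    assume "order lam m = 0"
    hence "Q = (\<lambda>i j. 0)" using BQ0 by simp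
    hence "mmult Q X i0 i0 = 0" by simp
    thus False using QX pq i0 unfolding X_def by (simp add: fun_eq_iff)
  qed
  then obtain r where "order lam m = Suc r" using not0_implies_Suc by blast
  hence "mmult B Q = (\<lambda>i j. 0)" using pow_kill[of B, OF symB] BQ0 by simp
  hence AQ: "mmult A Q = (\<lambda>i j. lam * Q i j)" unfolding B_def mmult_shift by (auto simp: fun_eq_iff)
  define F where "F = (\<lambda>i j. Q i j / poly q lam)"
  have AF: "mmult A F = (\<lambda>i j. lam * F i j)"
    using AQ unfolding F_def by (simp add: mmult_scale_right[of A "1 / poly q lam" Q, simplified] fun_eq_iff)
  have Fform: "F = (\<lambda>i j. \<Sum>l\<le>degree q. (coeff q l / poly q lam) * mpow A l i j)"
    unfolding F_def Q_def meval_def by (simp add: sum_divide_distrib)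
  have Fsym: "F i j = F j i" for i j
    unfolding Fform using mpow_sym[of A, OF sym] by simp
  have QF: "mmult Q F = (\<lambda>i j. poly q lam * F i j)" unfolding Q_def by (rule meval_eig[OF AF])
  have FF: "mmult F F = F"
  proof -
    have "mmult F F = (\<lambda>i j. (1 / poly q lam) * mmult Q F i j)"
    proof (intro ext)
      fix i j
      have "mmult F F i j = (\<Sum>k\<in>UNIV. (1 / poly q lam) * (Q i k * F k j))"
        unfolding mmult_def by (rule sum.cong) (simp_all add: F_def)
      thus "mmult F F i j = (1 / poly q lam) * mmult Q F i j"
        by (simp add: mmult_def sum_distrib_left)
    qed
    thus ?thesis using QF pq by (simp add: fun_eq_iff)
  qed
  have FX: "mmult F X i0 i0 = x i0"
  proof -
    have "mmult F X = (\<lambda>i j. (1 / poly q lam) * mmult Q X i j)"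
    proof (intro ext)
      fix i j
      have "mmult F X i j = (\<Sum>k\<in>UNIV. (1 / poly q lam) * (Q i k * X k j))"
        unfolding mmult_def by (rule sum.cong) (simp_all add: F_def)
      thus "mmult F X i j = (1 / poly q lam) * mmult Q X i j"
        by (simp add: mmult_def sum_distrib_left)
    qed
    thus ?thesis using QX pq unfolding X_def by (simp add: fun_eq_iff)
  qed
  have Fnz: "F \<noteq> (\<lambda>i j. 0)"
  proof
    assume "F = (\<lambda>i j. 0)" thus False using FX i0 by simp
  qed
  show ?thesis
    apply (rule exI[of _ lam], rule exI[of _ F], rule exI[of _ "\<lambda>l. coeff q l / poly q lam"], rule exI[of _ "degree q"])
    using lmin x Fnz AF Fsym FF Fform by blast
qed

lemma mpow_walk:
  "mpow (adj E) l x y \<noteq> 0 \<Longrightarrow> walk E l x y"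
proof (induction l arbitrary: y)
  case 0 then show ?case by (simp add: idm_def split: if_splits)
next
  case (Suc l)
  have "(\<Sum>k\<in>UNIV. mpow (adj E) l x k * adj E k y) \<noteq> 0" using Suc.prems by (simp add: mmult_def)
  then obtain k where "mpow (adj E) l x k * adj E k y \<noteq> 0" by (rule sum.not_neutral_contains_not_neutral)
  hence "mpow (adj E) l x k \<noteq> 0" "E k y" by (auto simp: adj_def split: if_splits)
  thus ?case using Suc.IH by auto
qed

lemma funpow_period:
  fixes f :: "'a \<Rightarrow> 'a"
  assumes "(f ^^ i) x = (f ^^ (i + P)) x" "i \<le> k"
  shows "(f ^^ (k + c * P)) x = (f ^^ k) x"
proof (induction c)
  case 0 then show ?case by simp
next
  case (Suc c)
  have e1: "k - i + c * P + (i + P) = k + Suc c * P"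
  proof -
    have "Suc c * P = c * P + P" by simp
    thus ?thesis using assms(2) by linarith
  qed
  have e2: "k - i + c * P + i = k + c * P" using assms(2) by simp
  have "(f ^^ (k + Suc c * P)) x = (f ^^ (k - i + c * P + (i + P))) x" by (simp only: e1)
  also have "\<dots> = (f ^^ (k - i + c * P)) ((f ^^ (i + P)) x)" by (simp only: funpow_add comp_apply)
  also have "\<dots> = (f ^^ (k - i + c * P)) ((f ^^ i) x)" using assms(1) by simp
  also have "\<dots> = (f ^^ (k - i + c * P + i)) x" by (simp only: funpow_add comp_apply)
  also have "\<dots> = (f ^^ (k + c * P)) x" by (simp only: e2)
  finally show ?case using Suc by simp
qed

lemma idempotent_power:
  fixes f :: "'a::finite \<Rightarrow> 'a"
  shows "\<exists>m>0. \<forall>x. (f ^^ m) ((f ^^ m) x) = (f ^^ m) x"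
proof -
  define n where "n = CARD('a)"
  have ex: "\<exists>i P. P > 0 \<and> i \<le> n \<and> (f ^^ i) x = (f ^^ (i + P)) x" for x
  proof -
    have "\<not> inj_on (\<lambda>k. (f ^^ k) x) {..n}"
    proof
      assume "inj_on (\<lambda>k. (f ^^ k) x) {..n}"
      hence "card ((\<lambda>k. (f ^^ k) x) ` {..n}) = Suc n" by (simp add: card_image)
      moreover have "card ((\<lambda>k. (f ^^ k) x) ` {..n}) \<le> n" unfolding n_def by (rule card_mono) auto
      ultimately show False by simp
    qed
    then obtain a b where ab: "a \<le> n" "b \<le> n" "a \<noteq> b" "(f ^^ a) x = (f ^^ b) x"
      unfolding inj_on_def by auto
    show ?thesis
    proof (cases "a < b")
      case True thus ?thesis using ab by (intro exI[of _ a] exI[of _ "b - a"]) auto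
    next
      case False thus ?thesis using ab by (intro exI[of _ b] exI[of _ "a - b"]) auto
    qed
  qed
  obtain I P where IP: "\<And>x. P x > 0 \<and> I x \<le> n \<and> (f ^^ I x) x = (f ^^ (I x + P x)) x"
    using ex by metis
  define m where "m = (\<Prod>x\<in>UNIV. P x) * Suc n"
  have mpos: "m > 0" unfolding m_def using IP by (simp add: prod_pos)
  have "(f ^^ m) ((f ^^ m) x) = (f ^^ m) x" for x
  proof -
    have dv: "P x dvd m" unfolding m_def by (intro dvd_mult2 dvd_prodI) auto
    then obtain c where c: "m = c * P x" by (metis dvdE mult.commute)
    have pp: "(\<Prod>x\<in>UNIV. P x) > 0" using IP by (simp add: prod_pos)
    have "1 * Suc n \<le> (\<Prod>x\<in>UNIV. P x) * Suc n" by (rule mult_le_mono1) (use pp in linarith)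
    hence "I x \<le> m" unfolding m_def using IP[of x] by simp
    hence "(f ^^ (m + c * P x)) x = (f ^^ m) x" using IP[of x] funpow_period[where f=f and i="I x" and x=x and P="P x" and k=m and c=c] by simp
    thus ?thesis using c by (simp add: funpow_add)
  qed
  thus ?thesis using mpos by blast
qed

lemma bij_hom_aut:
  fixes f :: "'a::finite \<Rightarrow> 'a"
  assumes "bij f" "graph_hom E f"
  shows "graph_aut E f"
proof -
  define P where "P = {(i, j). E i j}"
  define h where "h = (\<lambda>(i, j). (f i, f j))"
  have inj: "inj_on h P" using assms(1) unfolding h_def inj_on_def bij_def by auto
  have sub: "h ` P \<subseteq> P" using assms(2) unfolding h_def P_def graph_hom_def by auto
  have eq: "h ` P = P" by (rule endo_inj_surj[OF _ sub inj]) simp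
  have "E i j \<longleftrightarrow> E (f i) (f j)" for i j
  proof
    assume "E i j" thus "E (f i) (f j)" using assms(2) unfolding graph_hom_def by blast
  next
    assume "E (f i) (f j)"
    hence "(f i, f j) \<in> h ` P" using eq unfolding P_def by simp
    then obtain i' j' where "E i' j'" "f i' = f i" "f j' = f j" unfolding h_def P_def by auto
    thus "E i j" using assms(1) unfolding bij_def inj_def by metis
  qed
  thus ?thesis using assms(1) unfolding graph_aut_def by blast
qed

lemma ip_refl_lemma:
  fixes z1 z2 w :: "nat \<Rightarrow> real"
  assumes "ip n w w = 2"
  shows "ip n (\<lambda>k. z1 k - ip n z1 w * w k) (\<lambda>k. z2 k - ip n z2 w * w k) = ip n z1 z2"
proof -
  define a where "a = ip n z1 w"
  define b where "b = ip n z2 w"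
  have "ip n (\<lambda>k. z1 k - a * w k) (\<lambda>k. z2 k - b * w k)
      = ip n z1 z2 - b * ip n z1 w - a * ip n z2 w + a * b * ip n w w"
    unfolding ip_def by (simp add: algebra_simps sum.distrib sum_subtractf sum_distrib_left)
  also have "\<dots> = ip n z1 z2" using assms unfolding a_def b_def by simp
  finally show ?thesis unfolding a_def b_def .
qed

lemma ip_sym: "ip n x y = ip n y x" unfolding ip_def by (simp add: mult.commute)

lemma ip_diff_right: "ip n x (\<lambda>k. y k - z k) = ip n x y - ip n x z"
  unfolding ip_def by (simp add: algebra_simps sum_subtractf)

lemma ip_diff_left: "ip n (\<lambda>k. y k - z k) x = ip n y x - ip n z x"
  unfolding ip_def by (simp add: algebra_simps sum_subtractf)

lemma ip_scale_right: "ip n x (\<lambda>k. z k - c * w k) = ip n x z - c * ip n x w"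
  unfolding ip_def by (simp add: algebra_simps sum_subtractf sum_distrib_left)

lemma sum_delta2:
  fixes g :: "'a::finite \<Rightarrow> real"
  assumes "i \<noteq> j"
  shows "(\<Sum>v\<in>UNIV. g v * (if v = i then 1 else if v = j then -1 else 0)) = g i - g j"
proof -
  have "(\<Sum>v\<in>UNIV. g v * (if v = i then 1 else if v = j then -1 else 0))
      = (\<Sum>v\<in>UNIV. (if v = i then g v else 0) - (if v = j then g v else 0))"
    by (rule sum.cong) (use assms in auto)
  also have "\<dots> = g i - g j" by (simp add: sum_subtractf)
  finally show ?thesis .
qed

lemma mpow_two: "mpow M 2 = mmult M M"
  by (simp add: numeral_2_eq_2)

lemma hom_funpow: "graph_hom E f \<Longrightarrow> graph_hom E (f ^^ m)"
  by (induction m) (auto simp: graph_hom_def)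

theorem theorem4p11:
  fixes E :: "'a::finite \<Rightarrow> 'a \<Rightarrow> bool"
  assumes "\<And>i j. E i j \<Longrightarrow> E j i"
    and "\<And>i. \<not> E i i"
    and "two_walk_regular E"
    and "\<not> bipartite E"
    and "\<not> complete_multipartite E"
    and "uniquely_vector_colorable E"
  shows "is_core E"
proof -
  have sym: "E i j \<Longrightarrow> E j i" for i j using assms(1) .
  have irr: "\<not> E i i" for i using assms(2) .
  define A where "A = adj E"
  have Asym: "A i j = A j i" for i j unfolding A_def adj_def using sym by auto
  have A01: "A i j = (if E i j then 1 else 0)" for i j unfolding A_def adj_def by simp
  have Anonneg: "A i j \<ge> 0" for i j using A01 by simp
  obtain lam F c D where lmin: "\<forall>y. qf A y \<ge> lam * nrm y"
    and xex: "\<exists>x. nrm x = 1 \<and> qf A x = lam" and Fnz: "F \<noteq> (\<lambda>i j. 0)"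
    and AF: "mmult A F = (\<lambda>i j. lam * F i j)" and Fsym: "\<forall>i j. F i j = F j i"
    and FF: "mmult F F = F" and Fform: "F = (\<lambda>i j. \<Sum>l\<le>D. c l * mpow A l i j)"
    using projector_exists[of A, OF Asym] by blast
  have owr: "one_walk_regular E" and tw: "\<forall>l. \<exists>cc. \<forall>i j. dist2 E i j \<longrightarrow> mpow A l i j = cc"
    using assms(3) unfolding two_walk_regular_def A_def by auto
  have "\<forall>l. \<exists>a. \<forall>i. mpow A l i i = a" using owr unfolding one_walk_regular_def A_def by blast
  then obtain a where a: "\<And>l i. mpow A l i i = a l" by metis
  have "\<forall>l. \<exists>b. \<forall>i j. E i j \<longrightarrow> mpow A l i j = b" using owr unfolding one_walk_regular_def A_def by blast
  then obtain b where b: "\<And>l i j. E i j \<Longrightarrow> mpow A l i j = b l" by metis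
  from tw obtain cc where cc: "\<And>l i j. dist2 E i j \<Longrightarrow> mpow A l i j = cc l" by metis
  define f0 where "f0 = (\<Sum>l\<le>D. c l * a l)"
  define f1 where "f1 = (\<Sum>l\<le>D. c l * b l)"
  define f2 where "f2 = (\<Sum>l\<le>D. c l * cc l)"
  have Fd: "F i i = f0" for i unfolding Fform f0_def using a by simp
  have Fe: "E i j \<Longrightarrow> F i j = f1" for i j unfolding Fform f1_def using b by simp
  have F2: "dist2 E i j \<Longrightarrow> F i j = f2" for i j unfolding Fform f2_def using cc by simp
  have Fwalk: "F x y = 0" if "\<not> (\<exists>l. walk E l x y)" for x y
  proof -
    have "mpow A l x y = 0" for l using mpow_walk[of E l x y] that unfolding A_def by blast
    thus ?thesis unfolding Fform by simp
  qed
  define kd where "kd = a 2"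
  have deg: "(\<Sum>j\<in>UNIV. A i j) = kd" for i
  proof -
    have "kd = mmult A A i i" unfolding kd_def using a[of 2 i] mpow_two by metis
    also have "\<dots> = (\<Sum>j\<in>UNIV. A i j)" unfolding mmult_def
      by (rule sum.cong) (auto simp: A01 sym)
    finally show ?thesis by simp
  qed
  have "\<exists>i j. E i j"
  proof (rule ccontr)
    assume "\<not> ?thesis"
    hence "bipartite E" unfolding bipartite_def by auto
    thus False using assms(4) by simp
  qed
  then obtain i0 j0 where e0: "E i0 j0" by blast
  have ij0: "i0 \<noteq> j0" using e0 irr by auto
  have kdpos: "kd > 0"
  proof -
    have "A i0 j0 \<le> (\<Sum>j\<in>UNIV. A i0 j)" by (rule member_le_sum) (auto simp: Anonneg)
    thus ?thesis using deg[of i0] A01 e0 by simp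
  qed
  have lamneg: "lam \<le> -1"
  proof -
    define y where "y u = (if u = i0 then 1 else if u = j0 then -1 else (0::real))" for u
    have inner: "(\<Sum>v\<in>UNIV. A u v * y v) = A u i0 - A u j0" for u
      unfolding y_def by (rule sum_delta2[OF ij0])
    have "qf A y = (\<Sum>u\<in>UNIV. (\<Sum>v\<in>UNIV. A u v * y v) * y u)"
      unfolding qf_def by (simp add: sum_distrib_left sum_distrib_right mult_ac)
    also have "\<dots> = (\<Sum>u\<in>UNIV. (A u i0 - A u j0) * y u)" by (simp add: inner)
    also have "\<dots> = (A i0 i0 - A i0 j0) - (A j0 i0 - A j0 j0)"
      unfolding y_def by (rule sum_delta2[OF ij0])
    also have "\<dots> = -2" using A01 e0 sym irr by simp
    finally have qy: "qf A y = -2" .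
    have "nrm y = (\<Sum>v\<in>UNIV. y v * y v)" unfolding nrm_def by (simp add: power2_eq_square)
    also have "\<dots> = y i0 - y j0" unfolding y_def[of v for v] by (rule sum_delta2[OF ij0])
    also have "\<dots> = 2" unfolding y_def using ij0 by simp
    finally have "nrm y = 2" .
    moreover have "lam * nrm y \<le> qf A y" using lmin by blast
    ultimately show ?thesis using qy by simp
  qed
  have qlow: "qf A y \<ge> - kd * nrm y" for y
  proof -
    have pt: "A u v * y u * y v \<ge> - (A u v * ((y u)\<^sup>2 + (y v)\<^sup>2) / 2)" for u v
    proof -
      have h: "0 \<le> (y u + y v)\<^sup>2" by simp
      have "y u * y v \<ge> - (((y u)\<^sup>2 + (y v)\<^sup>2) / 2)" using h by (simp add: power2_eq_square field_simps)
      hence "A u v * (y u * y v) \<ge> A u v * (- (((y u)\<^sup>2 + (y v)\<^sup>2) / 2))"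
        by (rule mult_left_mono) (rule Anonneg)
      thus ?thesis by (simp add: mult.assoc)
    qed
    have "qf A y \<ge> (\<Sum>u\<in>UNIV. \<Sum>v\<in>UNIV. - (A u v * ((y u)\<^sup>2 + (y v)\<^sup>2) / 2))"
      unfolding qf_def by (intro sum_mono pt)
    also have "(\<Sum>u\<in>UNIV. \<Sum>v\<in>UNIV. - (A u v * ((y u)\<^sup>2 + (y v)\<^sup>2) / 2))
        = (-1/2) * ((\<Sum>u\<in>UNIV. \<Sum>v\<in>UNIV. A u v * (y u)\<^sup>2) + (\<Sum>u\<in>UNIV. \<Sum>v\<in>UNIV. A u v * (y v)\<^sup>2))"
    proof -
      have "(\<Sum>u\<in>UNIV. \<Sum>v\<in>UNIV. - (A u v * ((y u)\<^sup>2 + (y v)\<^sup>2) / 2))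
          = (\<Sum>u\<in>UNIV. \<Sum>v\<in>UNIV. (-1/2) * (A u v * (y u)\<^sup>2) + (-1/2) * (A u v * (y v)\<^sup>2))"
        by (intro sum.cong refl) (simp add: algebra_simps)
      also have "\<dots> = (-1/2) * ((\<Sum>u\<in>UNIV. \<Sum>v\<in>UNIV. A u v * (y u)\<^sup>2) + (\<Sum>u\<in>UNIV. \<Sum>v\<in>UNIV. A u v * (y v)\<^sup>2))"
        by (simp only: sum.distrib sum_distrib_left[symmetric] distrib_left)
      finally show ?thesis .
    qed
    also have "(\<Sum>u\<in>UNIV. \<Sum>v\<in>UNIV. A u v * (y u)\<^sup>2) = kd * nrm y"
    proof -
      have "(\<Sum>u\<in>UNIV. \<Sum>v\<in>UNIV. A u v * (y u)\<^sup>2) = (\<Sum>u\<in>UNIV. (\<Sum>v\<in>UNIV. A u v) * (y u)\<^sup>2)"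
        by (simp add: sum_distrib_right)
      also have "\<dots> = kd * nrm y" by (simp add: deg nrm_def sum_distrib_left)
      finally show ?thesis .
    qed
    also have "(\<Sum>u\<in>UNIV. \<Sum>v\<in>UNIV. A u v * (y v)\<^sup>2) = kd * nrm y"
    proof -
      have "(\<Sum>u\<in>UNIV. \<Sum>v\<in>UNIV. A u v * (y v)\<^sup>2) = (\<Sum>v\<in>UNIV. \<Sum>u\<in>UNIV. A v u * (y v)\<^sup>2)"
        by (subst sum.swap) (simp add: Asym)
      also have "\<dots> = (\<Sum>v\<in>UNIV. (\<Sum>u\<in>UNIV. A v u) * (y v)\<^sup>2)"
        by (simp add: sum_distrib_right)
      also have "\<dots> = kd * nrm y" by (simp add: deg nrm_def sum_distrib_left)
      finally show ?thesis .
    qed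
    finally show ?thesis by simp
  qed
  have lamlow: "lam \<ge> - kd"
  proof -
    obtain x where "nrm x = 1" "qf A x = lam" using xex by blast
    thus ?thesis using qlow[of x] by simp
  qed
  have Gram: "(\<Sum>k\<in>UNIV. F k i * F k j) = F i j" for i j
  proof -
    have "F i j = mmult F F i j" using FF by simp
    also have "\<dots> = (\<Sum>k\<in>UNIV. F k i * F k j)" unfolding mmult_def using Fsym by simp
    finally show ?thesis by simp
  qed
  have f0pos: "f0 > 0"
  proof -
    have sq: "f0 = (\<Sum>k\<in>UNIV. (F k i)\<^sup>2)" for i using Gram[of i i] Fd[of i] by (simp add: power2_eq_square)
    have "f0 \<ge> 0" unfolding sq[of i0] by (simp add: sum_nonneg)
    moreover have "f0 \<noteq> 0"
    proof
      assume f00: "f0 = 0"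
      have "F k i = 0" for k i
      proof -
        have "\<forall>k\<in>UNIV. (F k i)\<^sup>2 = 0" using sq[of i] f00 by (subst sum_nonneg_eq_0_iff[symmetric]) auto
        thus ?thesis by simp
      qed
      hence "F = (\<lambda>i j. 0)" by (auto intro!: ext)
      thus False using Fnz by simp
    qed
    ultimately show ?thesis by simp
  qed
  have f1val: "kd * f1 = lam * f0"
  proof -
    have "lam * f0 = mmult A F i0 i0" using AF Fd by simp
    also have "\<dots> = (\<Sum>j\<in>UNIV. A i0 j * f1)" unfolding mmult_def
      by (rule sum.cong) (auto simp: A01 Fe sym)
    also have "\<dots> = kd * f1" using deg[of i0] by (simp add: sum_distrib_right[symmetric])
    finally show ?thesis by simp
  qed

  have lam0: "lam < 0" using lamneg by simp
  define t0 where "t0 = 1 - kd / lam"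
  have t0m1: "-1 / (t0 - 1) = lam / kd" unfolding t0_def using lam0 kdpos by (simp add: field_simps)
  have t0ge: "t0 \<ge> 2"
  proof -
    have "kd / lam \<le> -1" using lam0 lamlow by (simp add: neg_divide_le_eq)
    thus ?thesis unfolding t0_def by simp
  qed
  have f1eq: "f1 / f0 = lam / kd" using f1val f0pos kdpos by (simp add: field_simps)
  define n where "n = card (UNIV :: 'a set)"
  have npos: "n > 0" unfolding n_def by simp
  obtain e where e: "bij_betw e {0..<n} (UNIV::'a set)"
    using ex_bij_betw_nat_finite[of "UNIV::'a set"] unfolding n_def by auto
  define p where "p i = (\<lambda>k. F (e k) i / sqrt f0)" for i
  have ss: "sqrt f0 * sqrt f0 = f0" using f0pos by simp
  have gp: "ip n (p i) (p j) = F i j / f0" for i j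
  proof -
    have "ip n (p i) (p j) = (\<Sum>k\<in>{0..<n}. F (e k) i * F (e k) j / f0)"
      unfolding ip_def p_def lessThan_atLeast0 by (rule sum.cong) (simp_all only: times_divide_times_eq ss)
    also have "\<dots> = (\<Sum>v\<in>UNIV. F v i * F v j / f0)"
      using sum.reindex_bij_betw[OF e, of "\<lambda>v. F v i * F v j / f0"] by simp
    also have "\<dots> = F i j / f0" using Gram[of i j] by (simp add: sum_divide_distrib[symmetric])
    finally show ?thesis .
  qed
  have pp: "ip n (p v) (p v) = 1" for v using gp Fd f0pos by simp
  have pcol: "vector_coloring E t0 n p"
    unfolding vector_coloring_def using pp gp Fe f1eq t0m1 by auto
  have lower: "t0 \<le> t" if tc: "vector_coloring E t d q" and t2: "t \<ge> 2" for t d q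
  proof -
    have nq: "ip d (q i) (q i) = 1" for i using tc unfolding vector_coloring_def by blast
    have eq: "ip d (q i) (q j) \<le> -1 / (t - 1)" if "E i j" for i j
      using tc that unfolding vector_coloring_def by blast
    define z where "z s = (\<lambda>i. q i s)" for s
    have "(\<Sum>s<d. lam * nrm (z s)) \<le> (\<Sum>s<d. qf A (z s))" by (rule sum_mono) (use lmin in blast)
    also have "(\<Sum>s<d. qf A (z s)) = (\<Sum>i\<in>UNIV. \<Sum>j\<in>UNIV. A i j * ip d (q i) (q j))"
    proof -
      have "(\<Sum>s<d. qf A (z s)) = (\<Sum>s<d. \<Sum>i\<in>UNIV. \<Sum>j\<in>UNIV. A i j * (q i s * q j s))"
        unfolding qf_def z_def by (simp add: mult.assoc)
      also have "\<dots> = (\<Sum>i\<in>UNIV. \<Sum>s<d. \<Sum>j\<in>UNIV. A i j * (q i s * q j s))" by (rule sum.swap)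
      also have "\<dots> = (\<Sum>i\<in>UNIV. \<Sum>j\<in>UNIV. \<Sum>s<d. A i j * (q i s * q j s))"
        by (rule sum.cong[OF refl]) (rule sum.swap)
      also have "\<dots> = (\<Sum>i\<in>UNIV. \<Sum>j\<in>UNIV. A i j * ip d (q i) (q j))"
        unfolding ip_def by (simp add: sum_distrib_left)
      finally show ?thesis .
    qed
    also have "\<dots> \<le> (\<Sum>i\<in>UNIV. \<Sum>j\<in>UNIV. A i j * (-1 / (t - 1)))"
      by (intro sum_mono) (use eq in \<open>auto simp: A01\<close>)
    also have "\<dots> = real n * (kd * (-1 / (t - 1)))"
    proof -
      have "(\<Sum>i\<in>UNIV. \<Sum>j\<in>UNIV. A i j * r) = real n * (kd * r)" for r
      proof -
        have "(\<Sum>i\<in>UNIV. \<Sum>j\<in>UNIV. A i j * r) = (\<Sum>i\<in>UNIV. (\<Sum>j\<in>UNIV. A i j) * r)"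
          by (simp only: sum_distrib_right)
        also have "\<dots> = (\<Sum>i\<in>(UNIV::'a set). kd * r)" by (simp only: deg)
        also have "\<dots> = real n * (kd * r)" by (simp add: n_def)
        finally show ?thesis .
      qed
      thus ?thesis by blast
    qed
    finally have h1: "(\<Sum>s<d. lam * nrm (z s)) \<le> real n * (kd * (-1 / (t - 1)))" .
    have "(\<Sum>s<d. lam * nrm (z s)) = lam * (\<Sum>i\<in>UNIV. \<Sum>s<d. q i s * q i s)"
      unfolding nrm_def z_def by (simp add: sum_distrib_left power2_eq_square sum.swap[of _ "{..<d}"])
    also have "\<dots> = lam * real n" using nq unfolding ip_def n_def by simp
    finally have "lam * real n \<le> real n * (kd * (-1 / (t - 1)))" using h1 by simp
    hence "real n * lam \<le> real n * (kd * (-1 / (t - 1)))" by (simp only: mult.commute)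
    hence "lam \<le> kd * (-1 / (t - 1))" by (rule mult_left_le_imp_le) (use npos in simp)
    hence "lam * (t - 1) \<le> - kd" using t2 by (simp add: field_simps)
    hence "(t - 1) * lam \<le> - kd" by (simp add: mult.commute)
    hence "- kd / lam \<le> t - 1" using neg_divide_le_eq[OF lam0, of "-kd" "t-1"] by simp
    thus ?thesis unfolding t0_def by simp
  qed
  have chi: "chi_v E = t0"
    unfolding chi_v_def by (rule cInf_eq_minimum) (use pcol t0ge lower in auto)
  have U: "gram d q = gram d' q'" if "vector_coloring E t0 d q" "vector_coloring E t0 d' q'" for d q d' q'
    using assms(6) that unfolding uniquely_vector_colorable_def chi by blast
  have inv: "F (g i) (g j) = F i j" if hg: "graph_hom E g" for g i j
  proof -
    have "vector_coloring E t0 n (\<lambda>i. p (g i))"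
      using pcol hg unfolding vector_coloring_def graph_hom_def by auto
    hence "gram n (\<lambda>i. p (g i)) = gram n p" using U pcol by blast
    hence "ip n (p (g i)) (p (g j)) = ip n (p i) (p j)" unfolding gram_def by metis
    thus ?thesis using gp f0pos by simp
  qed
  have conn: "\<exists>l. walk E l x y" for x y
  proof (rule ccontr)
    assume nw: "\<not> ?thesis"
    define C where "C = {v. \<exists>l. walk E l x v}"
    have xC: "x \<in> C" unfolding C_def by (rule CollectI, rule exI[of _ 0]) simp
    have yC: "y \<notin> C" using nw unfolding C_def by blast
    have Cin: "w \<in> C" if vC: "v \<in> C" and Evw: "E v w" for v w
    proof -
      obtain l where "walk E l x v" using vC unfolding C_def by blast
      hence "walk E (Suc l) x w" using Evw by auto
      thus ?thesis unfolding C_def by blast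
    qed
    have Cout: "w \<notin> C" if "v \<notin> C" "E v w" for v w using Cin sym that by blast
    have Fxy: "F x y = 0" by (rule Fwalk[OF nw])
    define w where "w = (\<lambda>k. p y k - p x k)"
    define R where "R z = (\<lambda>k. z k - ip n z w * w k)" for z
    have pxy: "ip n (p x) (p y) = 0" using gp Fxy by simp
    have pyx: "ip n (p y) (p x) = 0" using pxy ip_sym by metis
    have ww: "ip n w w = 2" unfolding w_def by (simp add: ip_diff_left ip_diff_right pp pxy pyx)
    have Rip: "ip n (R z1) (R z2) = ip n z1 z2" for z1 z2 unfolding R_def by (rule ip_refl_lemma[OF ww])
    have yw: "ip n (p y) w = 1" unfolding w_def by (simp add: ip_diff_right pp pyx)
    have xw: "ip n (p x) w = -1" unfolding w_def by (simp add: ip_diff_right pp pxy)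
    have xRy: "ip n (p x) (R (p y)) = 1" unfolding R_def ip_scale_right by (simp add: pxy yw xw)
    define q where "q v = (if v \<in> C then p v else R (p v))" for v
    have qcol: "vector_coloring E t0 n q"
      unfolding vector_coloring_def
    proof (intro conjI allI impI)
      fix i show "ip n (q i) (q i) = 1" unfolding q_def by (simp add: pp Rip)
    next
      fix i j assume Eij: "E i j"
      have "ip n (q i) (q j) = ip n (p i) (p j)"
      proof (cases "i \<in> C")
        case True thus ?thesis using Cin[OF True Eij] unfolding q_def by simp
      next
        case False thus ?thesis using Cout[OF False Eij] unfolding q_def by (simp add: Rip)
      qed
      thus "ip n (q i) (q j) \<le> -1 / (t0 - 1)" using pcol Eij unfolding vector_coloring_def by simp
    qed
    have "gram n q = gram n p" using U qcol pcol by blast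
    hence "ip n (q x) (q y) = ip n (p x) (p y)" unfolding gram_def by metis
    thus False using xC yC xRy pxy unfolding q_def by simp
  qed
  define T where "T i j = (\<forall>v. F v i = F v j)" for i j
  have eqvT: "equivp T" unfolding T_def by (intro equivpI reflpI sympI transpI) auto
  have TF: "T i j \<longleftrightarrow> F i j = f0" for i j
  proof
    assume "T i j"
    hence "F j i = F j j" unfolding T_def by blast
    thus "F i j = f0" using Fsym Fd by metis
  next
    assume h: "F i j = f0"
    have "(\<Sum>v\<in>UNIV. (F v i - F v j)\<^sup>2)
        = (\<Sum>v\<in>UNIV. F v i * F v i) - 2 * (\<Sum>v\<in>UNIV. F v i * F v j) + (\<Sum>v\<in>UNIV. F v j * F v j)"
    proof -
      have "(\<Sum>v\<in>UNIV. (F v i - F v j)\<^sup>2) = (\<Sum>v\<in>UNIV. (F v i * F v i - 2 * (F v i * F v j)) + F v j * F v j)"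
        by (rule sum.cong) (simp_all add: power2_eq_square algebra_simps)
      thus ?thesis by (simp only: sum.distrib sum_subtractf sum_distrib_left[symmetric])
    qed
    also have "\<dots> = 0" using Gram[of i i] Gram[of i j] Gram[of j j] Fd h by simp
    finally have "\<forall>v\<in>UNIV. (F v i - F v j)\<^sup>2 = 0" by (subst sum_nonneg_eq_0_iff[symmetric]) auto
    thus "T i j" unfolding T_def by simp
  qed
  have f1neg: "f1 < 0"
  proof -
    have "lam * f0 < 0" using lam0 f0pos by (simp add: mult_neg_pos)
    hence "kd * f1 < 0" using f1val by simp
    thus ?thesis using kdpos by (simp add: mult_less_0_iff)
  qed
  have ET: "\<not> T i j" if "E i j" for i j using TF Fe[OF that] f1neg f0pos by simp
  show ?thesis unfolding is_core_def
  proof (intro allI impI)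
    fix f assume hom: "graph_hom E f"
    obtain m where m: "m > 0" "\<And>x. (f ^^ m) ((f ^^ m) x) = (f ^^ m) x"
      using idempotent_power by blast
    define g where "g = f ^^ m"
    have homg: "graph_hom E g" unfolding g_def by (rule hom_funpow[OF hom])
    have idem: "g (g v) = g v" for v unfolding g_def by (rule m(2))
    have Tg: "T v (g v)" for v
    proof -
      have "F v (g v) = F (g v) (g (g v))" using inv[OF homg, of v "g v"] by simp
      also have "\<dots> = f0" using idem Fd by simp
      finally show ?thesis using TF by simp
    qed
    have gid: "g v = v" for v
    proof (cases "\<exists>x y. dist2 E x y \<and> T x y")
      case True
      then obtain x y where xy: "dist2 E x y" "T x y" by blast
      hence "f2 = f0" using F2 TF by metis
      hence D: "T x y" if "dist2 E x y" for x y using F2[OF that] TF by simp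
      show ?thesis
      proof (cases "b 2 = 0")
        case False
        have tri: "\<exists>c. E u c \<and> E c w" if "E u w" for u w
        proof -
          have "mmult A A u w \<noteq> 0" using b[OF that, of 2] False mpow_two by metis
          then obtain k where "A u k * A k w \<noteq> 0" unfolding mmult_def
            by (rule sum.not_neutral_contains_not_neutral)
          thus ?thesis using A01 by (auto split: if_splits)
        qed
        have "complete_multipartite E"
          apply (rule comb_triangle[of E T])
          using sym irr eqvT ET D tri conn by blast+
        thus ?thesis using assms(5) by simp
      next
        case True
        have tf: False if h: "E u w" "E u c" "E c w" for u w c
        proof -
          have "A u c * A c w \<le> (\<Sum>k\<in>UNIV. A u k * A k w)" by (rule member_le_sum) (auto simp: Anonneg)
          also have "\<dots> = mpow A 2 u w" by (simp add: mpow_two mmult_def)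
          also have "\<dots> = 0" using b[OF h(1), of 2] True by simp
          finally show False using h A01 by simp
        qed
        have False
          apply (rule comb_trifree[of E T])
          using sym eqvT ET D tf conn assms(4) by blast+
        thus ?thesis by simp
      qed
    next
      case False
      hence nD: "\<not> T x y" if "dist2 E x y" for x y using that by blast
      show ?thesis
        apply (rule retraction_id[of E T g])
        using sym eqvT ET homg idem Tg nD conn by blast+
    qed
    have fm: "f ^^ m = id" using gid unfolding g_def by (auto simp: fun_eq_iff)
    obtain m' where m': "m = Suc m'" using m(1) not0_implies_Suc by blast
    have "f \<circ> f ^^ m' = id" using fm m' by simp
    moreover have "f ^^ m' \<circ> f = id" by (metis fm m' funpow_Suc_right)
    ultimately have "bij f" using o_bij by blast
    thus "graph_aut E f" by (rule bij_hom_aut[OF _ hom])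
  qed
qed

end
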